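(* Let $n\ge 5$. Then no subset $R\subseteq V_2$ of size $n-2$ such that any two distinct vertices of $R$ are at distance $2$ in $H(n)$ is a doubly resolving set of $H(n)$.
   Context: For $n\ge 5$, $H(n)$ is the graph with vertex set $V_1\cup V_2$, where $V_1=\{v_1,\dots,v_n\}$ and $V_2=\{v_iv_j: 1\le i<j\le n\}$ (each $v_iv_j$ a single vertex), and where $v_r\in V_1$ is adjacent to $v_iv_j\in V_2$ iff $r=i$ or $r=j$; there are no other edges. $d(u,v)$ is the shortest-path distance. For an ordered set $Q=\{q_1,\dots,q_l\}$ of vertices, $r(x|Q)=(d(x,q_1),\dots,d(x,q_l))$. $Q$ is a doubly resolving set of a graph $G$ if for any two distinct vertices $x,y$ of $G$, $r(x|Q)-r(y|Q)\neq\lambda(1,\dots,1)$ for every integer $\lambda$. *)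

theory Defs
  imports Main
begin

definition is_walk :: "'a set \<Rightarrow> ('a \<Rightarrow> 'a \<Rightarrow> bool) \<Rightarrow> 'a list \<Rightarrow> bool" where
  "is_walk V adj xs \<longleftrightarrow> xs \<noteq> [] \<and> set xs \<subseteq> V \<and>
     (\<forall>i. Suc i < length xs \<longrightarrow> adj (xs ! i) (xs ! Suc i))"

definition gdist :: "'a set \<Rightarrow> ('a \<Rightarrow> 'a \<Rightarrow> bool) \<Rightarrow> 'a \<Rightarrow> 'a \<Rightarrow> nat" where
  "gdist V adj x y = (LEAST k. \<exists>xs. is_walk V adj xs \<and> hd xs = x \<and> last xs = y \<and> length xs = Suc k)"

definition doubly_resolving :: "'a set \<Rightarrow> ('a \<Rightarrow> 'a \<Rightarrow> bool) \<Rightarrow> 'a set \<Rightarrow> bool" where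
  "doubly_resolving V adj Q \<longleftrightarrow> Q \<subseteq> V \<and>
     (\<forall>x\<in>V. \<forall>y\<in>V. x \<noteq> y \<longrightarrow>
        \<not> (\<exists>c::int. \<forall>q\<in>Q. int (gdist V adj x q) - int (gdist V adj y q) = c))"

datatype hvert = V1 nat | V2 nat nat  \<comment> \<open>V2 i j stands for the vertex v_i v_j, with i < j\<close>

definition HV1 :: "nat \<Rightarrow> hvert set" where
  "HV1 n = {V1 r | r. 1 \<le> r \<and> r \<le> n}"

definition HV2 :: "nat \<Rightarrow> hvert set" where
  "HV2 n = {V2 i j | i j. 1 \<le> i \<and> i < j \<and> j \<le> n}"

definition HV :: "nat \<Rightarrow> hvert set" where
  "HV n = HV1 n \<union> HV2 n"

fun Hadj :: "hvert \<Rightarrow> hvert \<Rightarrow> bool" where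
  "Hadj (V1 r) (V2 i j) = (r = i \<or> r = j)"
| "Hadj (V2 i j) (V1 r) = (r = i \<or> r = j)"
| "Hadj _ _ = False"

abbreviation Hdist :: "nat \<Rightarrow> hvert \<Rightarrow> hvert \<Rightarrow> nat" where
  "Hdist n \<equiv> gdist (HV n) Hadj"

end

theory Submission
  imports Defs
begin

lemma is_walk_single: "is_walk V adj [x] \<longleftrightarrow> x \<in> V"
  unfolding is_walk_def by auto

lemma is_walk_Cons2: "is_walk V adj (x#y#xs) \<longleftrightarrow> x \<in> V \<and> adj x y \<and> is_walk V adj (y#xs)"
proof
  assume H: "is_walk V adj (x#y#xs)"
  have all: "\<And>i. Suc i < length (x#y#xs) \<Longrightarrow> adj ((x#y#xs) ! i) ((x#y#xs) ! Suc i)"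
    using H unfolding is_walk_def by blast
  have a: "adj x y" using all[of 0] by simp
  have b: "\<forall>i. Suc i < length (y#xs) \<longrightarrow> adj ((y#xs) ! i) ((y#xs) ! Suc i)"
  proof (intro allI impI)
    fix i assume "Suc i < length (y#xs)"
    then have "Suc (Suc i) < length (x#y#xs)" by simp
    then have "adj ((x#y#xs) ! Suc i) ((x#y#xs) ! Suc (Suc i))" by (rule all)
    then show "adj ((y#xs) ! i) ((y#xs) ! Suc i)" by simp
  qed
  have "set (x#y#xs) \<subseteq> V" using H unfolding is_walk_def by blast
  then show "x \<in> V \<and> adj x y \<and> is_walk V adj (y#xs)" using a b unfolding is_walk_def by simp
next
  assume H: "x \<in> V \<and> adj x y \<and> is_walk V adj (y#xs)"
  have all: "\<And>i. Suc i < length (y#xs) \<Longrightarrow> adj ((y#xs) ! i) ((y#xs) ! Suc i)"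
    using H unfolding is_walk_def by blast
  have "\<forall>i. Suc i < length (x#y#xs) \<longrightarrow> adj ((x#y#xs) ! i) ((x#y#xs) ! Suc i)"
  proof (intro allI impI)
    fix i assume i: "Suc i < length (x#y#xs)"
    show "adj ((x#y#xs) ! i) ((x#y#xs) ! Suc i)"
    proof (cases i)
      case 0 then show ?thesis using H by simp
    next
      case (Suc k)
      then have "Suc k < length (y#xs)" using i by simp
      then have "adj ((y#xs) ! k) ((y#xs) ! Suc k)" by (rule all)
      then show ?thesis using Suc by simp
    qed
  qed
  moreover have "set (y#xs) \<subseteq> V" using H unfolding is_walk_def by blast
  ultimately show "is_walk V adj (x#y#xs)" using H unfolding is_walk_def by simp
qed

lemma gdist_le:
  assumes "is_walk V adj xs" "hd xs = x" "last xs = y"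
  shows "gdist V adj x y \<le> length xs - 1"
proof -
  have "xs \<noteq> []" using assms(1) unfolding is_walk_def by auto
  then have "length xs = Suc (length xs - 1)" by simp
  then show ?thesis unfolding gdist_def using assms by (intro Least_le) blast
qed

lemma gdist_walk:
  assumes "is_walk V adj xs" "hd xs = x" "last xs = y"
  shows "\<exists>ws. is_walk V adj ws \<and> hd ws = x \<and> last ws = y \<and> length ws = Suc (gdist V adj x y)"
proof -
  have "xs \<noteq> []" using assms(1) unfolding is_walk_def by auto
  then have "length xs = Suc (length xs - 1)" by simp
  then have "\<exists>k. \<exists>xs. is_walk V adj xs \<and> hd xs = x \<and> last xs = y \<and> length xs = Suc k" using assms by blast
  then show ?thesis unfolding gdist_def by (rule LeastI_ex)
qed

definition ends :: "hvert \<Rightarrow> nat set" where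
  "ends q = (case q of V1 r \<Rightarrow> {} | V2 i j \<Rightarrow> {i,j})"

lemma ends_V2[simp]: "ends (V2 i j) = {i,j}" by (simp add: ends_def)

lemma HV2_E: "q \<in> HV2 n \<Longrightarrow> \<exists>i j. q = V2 i j \<and> 1 \<le> i \<and> i < j \<and> j \<le> n"
  unfolding HV2_def by auto

lemma mk_HV2: "1 \<le> a \<Longrightarrow> a \<le> n \<Longrightarrow> 1 \<le> b \<Longrightarrow> b \<le> n \<Longrightarrow> a \<noteq> b \<Longrightarrow> V2 (min a b) (max a b) \<in> HV2 n"
  unfolding HV2_def by (auto simp: min_def max_def)

lemma HV_I1: "1 \<le> r \<Longrightarrow> r \<le> n \<Longrightarrow> V1 r \<in> HV n" unfolding HV_def HV1_def by auto
lemma HV_I2: "q \<in> HV2 n \<Longrightarrow> q \<in> HV n" unfolding HV_def by auto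

lemma ends_inj: "q \<in> HV2 n \<Longrightarrow> q' \<in> HV2 n \<Longrightarrow> ends q = ends q' \<Longrightarrow> q = q'"
  unfolding HV2_def by (auto simp: doubleton_eq_iff)

lemma dist_V1_in:
  assumes "q \<in> HV2 n" "r \<in> ends q"
  shows "Hdist n (V1 r) q = 1"
proof -
  obtain i j where q: "q = V2 i j" "1 \<le> i" "i < j" "j \<le> n" using HV2_E[OF assms(1)] by blast
  have r: "1 \<le> r" "r \<le> n" "r = i \<or> r = j" using assms(2) q by auto
  have w: "is_walk (HV n) Hadj [V1 r, q]"
    using r q assms(1) by (auto simp: is_walk_Cons2 is_walk_single HV_I1 HV_I2)
  have le: "Hdist n (V1 r) q \<le> 1" using gdist_le[OF w] by simp
  obtain ws where ws: "is_walk (HV n) Hadj ws" "hd ws = V1 r" "last ws = q"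
    "length ws = Suc (Hdist n (V1 r) q)" using gdist_walk[OF w] by auto
  have "Hdist n (V1 r) q \<noteq> 0"
  proof
    assume "Hdist n (V1 r) q = 0"
    then obtain a where "ws = [a]" using ws(4) by (auto simp: length_Suc_conv)
    then show False using ws q by simp
  qed
  then show ?thesis using le by simp
qed

lemma dist_V1_out:
  assumes "q \<in> HV2 n" "r \<notin> ends q" "1 \<le> r" "r \<le> n"
  shows "Hdist n (V1 r) q = 3"
proof -
  obtain i j where q: "q = V2 i j" "1 \<le> i" "i < j" "j \<le> n" using HV2_E[OF assms(1)] by blast
  have ri: "r \<noteq> i" "r \<noteq> j" using assms(2) q by auto
  have m: "V2 (min r i) (max r i) \<in> HV2 n" using mk_HV2[of r n i] ri q assms by auto
  have w: "is_walk (HV n) Hadj [V1 r, V2 (min r i) (max r i), V1 i, q]"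
    using q assms m by (auto simp: is_walk_Cons2 is_walk_single HV_I1 HV_I2 min_def max_def)
  have le: "Hdist n (V1 r) q \<le> 3" using gdist_le[OF w] by (simp add: eval_nat_numeral)
  obtain ws where ws: "is_walk (HV n) Hadj ws" "hd ws = V1 r" "last ws = q"
    "length ws = Suc (Hdist n (V1 r) q)" using gdist_walk[OF w] by auto
  have "Hdist n (V1 r) q \<noteq> 0"
  proof
    assume "Hdist n (V1 r) q = 0"
    then obtain a where "ws = [a]" using ws(4) by (auto simp: length_Suc_conv)
    then show False using ws q by simp
  qed
  moreover have "Hdist n (V1 r) q \<noteq> 1"
  proof
    assume "Hdist n (V1 r) q = 1"
    then obtain a b where "ws = [a,b]" using ws(4) by (auto simp: length_Suc_conv)
    then show False using ws q ri by (simp add: is_walk_Cons2)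
  qed
  moreover have "Hdist n (V1 r) q \<noteq> 2"
  proof
    assume "Hdist n (V1 r) q = 2"
    then obtain a b c where abc: "ws = [a,b,c]" using ws(4) by (auto simp: numeral_2_eq_2 length_Suc_conv)
    then have "Hadj (V1 r) b" "Hadj b (V2 i j)" using ws q by (auto simp: is_walk_Cons2)
    then show False by (cases b) auto
  qed
  ultimately show ?thesis using le by linarith
qed

lemma dist_V2_share:
  assumes "q \<in> HV2 n" "q' \<in> HV2 n" "q \<noteq> q'" "c \<in> ends q" "c \<in> ends q'"
  shows "Hdist n q q' = 2"
proof -
  obtain i j where q: "q = V2 i j" "1 \<le> i" "i < j" "j \<le> n" using HV2_E[OF assms(1)] by blast
  obtain i' j' where q': "q' = V2 i' j'" "1 \<le> i'" "i' < j'" "j' \<le> n" using HV2_E[OF assms(2)] by blast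
  have c: "1 \<le> c" "c \<le> n" using assms(4) q by auto
  have w: "is_walk (HV n) Hadj [q, V1 c, q']"
    using q q' assms c by (auto simp: is_walk_Cons2 is_walk_single HV_I1 HV_I2)
  have le: "Hdist n q q' \<le> 2" using gdist_le[OF w] by (simp add: eval_nat_numeral)
  obtain ws where ws: "is_walk (HV n) Hadj ws" "hd ws = q" "last ws = q'"
    "length ws = Suc (Hdist n q q')" using gdist_walk[OF w] by auto
  have "Hdist n q q' \<noteq> 0"
  proof
    assume "Hdist n q q' = 0"
    then obtain a where "ws = [a]" using ws(4) by (auto simp: length_Suc_conv)
    then show False using ws assms(3) by simp
  qed
  moreover have "Hdist n q q' \<noteq> 1"
  proof
    assume "Hdist n q q' = 1"
    then obtain a b where "ws = [a,b]" using ws(4) by (auto simp: length_Suc_conv)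
    then show False using ws q q' by (simp add: is_walk_Cons2)
  qed
  ultimately show ?thesis using le by linarith
qed

lemma dist2_share:
  assumes "q \<in> HV2 n" "q' \<in> HV2 n" "Hdist n q q' = 2"
  shows "ends q \<inter> ends q' \<noteq> {}"
proof
  assume dis: "ends q \<inter> ends q' = {}"
  obtain i j where q: "q = V2 i j" "1 \<le> i" "i < j" "j \<le> n" using HV2_E[OF assms(1)] by blast
  obtain i' j' where q': "q' = V2 i' j'" "1 \<le> i'" "i' < j'" "j' \<le> n" using HV2_E[OF assms(2)] by blast
  have ne: "i \<noteq> i'" using dis q q' by auto
  have m: "V2 (min i i') (max i i') \<in> HV2 n" using mk_HV2[of i n i'] ne q q' by auto
  have w: "is_walk (HV n) Hadj [q, V1 i, V2 (min i i') (max i i'), V1 i', q']"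
    using q q' m assms by (auto simp: is_walk_Cons2 is_walk_single HV_I1 HV_I2 min_def max_def)
  obtain ws where ws: "is_walk (HV n) Hadj ws" "hd ws = q" "last ws = q'"
    "length ws = Suc (Hdist n q q')" using gdist_walk[OF w] by auto
  obtain a b c where abc: "ws = [a,b,c]" using ws(4) assms(3) by (auto simp: numeral_2_eq_2 length_Suc_conv)
  then have "Hadj (V2 i j) b" "Hadj b (V2 i' j')" using ws q q' by (auto simp: is_walk_Cons2)
  then obtain r where "b = V1 r" "r = i \<or> r = j" "r = i' \<or> r = j'" by (cases b) auto
  then have "r \<in> ends q \<inter> ends q'" using q q' by auto
  then show False using dis by simp
qed

lemma not_dr:
  assumes "x \<in> V" "y \<in> V" "x \<noteq> y" "\<forall>q\<in>Q. int (gdist V adj x q) - int (gdist V adj y q) = c"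
  shows "\<not> doubly_resolving V adj Q"
proof
  assume H: "doubly_resolving V adj Q"
  have "\<not> (\<exists>c::int. \<forall>q\<in>Q. int (gdist V adj x q) - int (gdist V adj y q) = c)"
    using H[unfolded doubly_resolving_def, THEN conjunct2, rule_format, OF assms(1,2,3)] .
  moreover have "\<exists>c::int. \<forall>q\<in>Q. int (gdist V adj x q) - int (gdist V adj y q) = c"
    using assms(4) by (rule exI)
  ultimately show False by (rule notE)
qed

theorem proposition3p2:
  fixes n :: nat and R :: "hvert set"
  assumes "n \<ge> 5"
    and "R \<subseteq> HV2 n"
    and "card R = n - 2"
    and "\<forall>a\<in>R. \<forall>b\<in>R. a \<noteq> b \<longrightarrow> Hdist n a b = 2"
  shows "\<not> doubly_resolving (HV n) Hadj R"
proof -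
  have fin: "finite R" by (rule card_ge_0_finite) (use assms(1,3) in simp)
  have Rne: "R \<noteq> {}" using assms(1,3) by auto
  have inter: "\<And>a b. a \<in> R \<Longrightarrow> b \<in> R \<Longrightarrow> a \<noteq> b \<Longrightarrow> ends a \<inter> ends b \<noteq> {}"
    using assms(2,4) dist2_share by blast
  have endsE: "\<And>q. q \<in> R \<Longrightarrow> \<exists>i j. ends q = {i,j} \<and> i \<noteq> j \<and> 1 \<le> i \<and> i \<le> n \<and> 1 \<le> j \<and> j \<le> n"
    using assms(2) HV2_E by fastforce
  show ?thesis
  proof (cases "\<exists>c. \<forall>q\<in>R. c \<in> ends q")
    case True
    then obtain c where c: "\<And>q. q \<in> R \<Longrightarrow> c \<in> ends q" by blast
    obtain q0 where q0: "q0 \<in> R" using Rne by blast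
    have c1: "1 \<le> c" "c \<le> n" using endsE[OF q0] c[OF q0] by auto
    define f where "f q = the_elem (ends q - {c})" for q
    have fq: "\<And>q. q \<in> R \<Longrightarrow> ends q = {c, f q} \<and> f q \<noteq> c \<and> 1 \<le> f q \<and> f q \<le> n"
    proof -
      fix q assume qR: "q \<in> R"
      obtain i j where ij: "ends q = {i,j}" "i \<noteq> j" "1 \<le> i" "i \<le> n" "1 \<le> j" "j \<le> n"
        using endsE[OF qR] by blast
      have "c = i \<or> c = j" using c[OF qR] ij by auto
      then show "ends q = {c, f q} \<and> f q \<noteq> c \<and> 1 \<le> f q \<and> f q \<le> n"
      proof
        assume "c = i"
        then have "ends q - {c} = {j}" using ij by auto
        then show ?thesis using ij \<open>c = i\<close> unfolding f_def by auto
      next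
        assume "c = j"
        then have "ends q - {c} = {i}" using ij by auto
        then show ?thesis using ij \<open>c = j\<close> unfolding f_def by auto
      qed
    qed
    have inj: "inj_on f R"
    proof (rule inj_onI)
      fix a b assume "a \<in> R" "b \<in> R" "f a = f b"
      then have "ends a = ends b" using fq by metis
      then show "a = b" using ends_inj \<open>a \<in> R\<close> \<open>b \<in> R\<close> assms(2) by blast
    qed
    have cardf: "card (f ` R) = n - 2" using card_image[OF inj] assms(3) by simp
    have "\<exists>u. u \<in> {1..n} - {c} - f ` R"
    proof (rule ccontr)
      assume "\<not> ?thesis"
      then have "{1..n} - {c} \<subseteq> f ` R" by blast
      then have "card ({1..n} - {c}) \<le> card (f ` R)" using fin by (intro card_mono) auto
      moreover have "card ({1..n} - {c}) = n - 1" using c1 by simp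
      ultimately show False using cardf assms(1) by simp
    qed
    then obtain u where u: "1 \<le> u" "u \<le> n" "u \<noteq> c" "u \<notin> f ` R" by auto
    define y where "y = V2 (min c u) (max c u)"
    have yH: "y \<in> HV2 n" unfolding y_def using mk_HV2 c1 u by auto
    have ye: "ends y = {c, u}" unfolding y_def by (auto simp: min_def max_def)
    have dy: "Hdist n y q = 2" if qR: "q \<in> R" for q
    proof -
      have "y \<noteq> q"
      proof
        assume "y = q"
        then have "{c,u} = {c, f q}" using ye fq[OF qR] by simp
        then have "u = f q" using u(3) fq[OF qR] by (auto simp: doubleton_eq_iff)
        then show False using u(4) qR by auto
      qed
      then show ?thesis using dist_V2_share[OF yH _ _ _ c[OF qR]] qR assms(2) ye by auto
    qed
    have dx: "Hdist n (V1 c) q = 1" if qR: "q \<in> R" for q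
      using dist_V1_in c qR assms(2) by blast
    have "V1 c \<in> HV n" "y \<in> HV n" "V1 c \<noteq> y" using HV_I1[OF c1] HV_I2[OF yH] unfolding y_def by auto
    moreover have "\<forall>q\<in>R. int (Hdist n (V1 c) q) - int (Hdist n y q) = -1" using dx dy by simp
    ultimately show ?thesis by (rule not_dr)
  next
    case False
    obtain q1 where q1: "q1 \<in> R" using Rne by blast
    obtain a b where ab: "ends q1 = {a,b}" "a \<noteq> b" using endsE[OF q1] by blast
    obtain q2 where q2: "q2 \<in> R" "a \<notin> ends q2" using False by blast
    obtain q3 where q3: "q3 \<in> R" "b \<notin> ends q3" using False by blast
    have "q2 \<noteq> q1" using q2 ab by auto
    then have "b \<in> ends q2" using inter[OF q2(1) q1] ab q2 by auto
    then obtain c where c: "ends q2 = {b,c}" "c \<noteq> b" using endsE[OF q2(1)] by (auto simp: doubleton_eq_iff)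
    have ca: "c \<noteq> a" using c q2 by auto
    have "q3 \<noteq> q1" using q3 ab by auto
    then have "a \<in> ends q3" using inter[OF q3(1) q1] ab q3 by auto
    have "q3 \<noteq> q2" using q3 \<open>b \<in> ends q2\<close> by auto
    then have "c \<in> ends q3" using inter[OF q3(1) q2(1)] c q3 by auto
    have e3: "ends q3 = {a,c}" using endsE[OF q3(1)] \<open>a \<in> ends q3\<close> \<open>c \<in> ends q3\<close> ca by auto
    have sub: "ends q \<subseteq> {a,b,c}" if qR: "q \<in> R" for q
    proof -
      obtain i j where ij: "ends q = {i,j}" using endsE[OF qR] by blast
      have m1: "q = q1 \<or> {i,j} \<inter> {a,b} \<noteq> {}" using inter[OF qR q1] ij ab by auto
      have m2: "q = q2 \<or> {i,j} \<inter> {b,c} \<noteq> {}" using inter[OF qR q2(1)] ij c by auto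
      have m3: "q = q3 \<or> {i,j} \<inter> {a,c} \<noteq> {}" using inter[OF qR q3(1)] ij e3 by auto
      show ?thesis
      proof (cases "q = q1 \<or> q = q2 \<or> q = q3")
        case True
        then show ?thesis using ab(1) c(1) e3 by auto
      next
        case False
        then have n1: "{i,j} \<inter> {a,b} \<noteq> {}" and n2: "{i,j} \<inter> {b,c} \<noteq> {}"
          and n3: "{i,j} \<inter> {a,c} \<noteq> {}" using m1 m2 m3 by auto
        have bad: "x \<in> {a,b} \<Longrightarrow> x \<in> {b,c} \<Longrightarrow> x \<in> {a,c} \<Longrightarrow> False" for x
          using ab(2) c(2) ca by auto
        have "i \<in> {a,b,c}"
        proof (rule ccontr)
          assume "i \<notin> {a,b,c}"
          then have "j \<in> {a,b}" "j \<in> {b,c}" "j \<in> {a,c}" using n1 n2 n3 by auto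
          then show False by (rule bad)
        qed
        moreover have "j \<in> {a,b,c}"
        proof (rule ccontr)
          assume "j \<notin> {a,b,c}"
          then have "i \<in> {a,b}" "i \<in> {b,c}" "i \<in> {a,c}" using n1 n2 n3 by auto
          then show False by (rule bad)
        qed
        ultimately show ?thesis using ij by simp
      qed
    qed
    define S where "S = {1..n} - {a,b,c}"
    have c3: "card {a,b,c} = 3" using ab(2) c(2) ca by simp
    have "card {1..n} - card {a,b,c} \<le> card S" unfolding S_def by (rule diff_card_le_card_Diff) simp
    then have cS: "card S \<ge> 2" using c3 assms(1) by simp
    have finS: "finite S" unfolding S_def by simp
    have "S \<noteq> {}" using cS by (intro notI) simp
    then obtain d where d: "d \<in> S" by blast
    have "card (S - {d}) = card S - 1" using d finS by simp
    then have "card (S - {d}) > 0" using cS by simp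
    then have "S - {d} \<noteq> {}" by (intro notI) simp
    then obtain e where e: "e \<in> S - {d}" by blast
    have de: "d \<in> S" "e \<in> S" "d \<noteq> e" using d e by auto
    have d1: "1 \<le> d" "d \<le> n" "d \<notin> {a,b,c}" using de(1) unfolding S_def by auto
    have e1: "1 \<le> e" "e \<le> n" "e \<notin> {a,b,c}" using de(2) unfolding S_def by auto
    have dd: "Hdist n (V1 d) q = 3" "Hdist n (V1 e) q = 3" if qR: "q \<in> R" for q
    proof -
      have qH: "q \<in> HV2 n" using qR assms(2) by blast
      have "d \<notin> ends q" "e \<notin> ends q" using sub[OF qR] d1(3) e1(3) by blast+
      then show "Hdist n (V1 d) q = 3" "Hdist n (V1 e) q = 3"
        using dist_V1_out[OF qH _ d1(1,2)] dist_V1_out[OF qH _ e1(1,2)] by blast+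
    qed
    have "V1 d \<in> HV n" "V1 e \<in> HV n" "V1 d \<noteq> V1 e" using HV_I1 d1 e1 de(3) by auto
    moreover have "\<forall>q\<in>R. int (Hdist n (V1 d) q) - int (Hdist n (V1 e) q) = 0" using dd by simp
    ultimately show ?thesis by (rule not_dr)
  qed
qed

end
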